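(* Let $G=(V,E)$ be a control flow graph, let $p$ be a predicate node with successors $s_1,s_2$ in $G$ and with at least two successors in $A_p$, and let $i\in\{1,2\}$. Let $a,b\in V_p\setminus\{p\}$ be two distinct nodes. Then every maximal path from $s_i$ in $G$ contains $a$ before any occurrence of $b$ if and only if there is an $s_i$-strip containing both $a$ and $b$ in which $a$ occurs before $b$.
   Context: A control flow graph (CFG) is a finite directed graph $G=(V,E)$ in which every node has at most two outgoing edges; nodes with exactly two outgoing edges are predicate nodes. A path from $n_1$ is a nonempty finite or infinite sequence of nodes with each adjacent pair an edge; it is maximal if it is infinite or its last node has no successor. $V_p$ is the set of nodes occurring on all maximal paths from $p$ in $G$. For $V'\subseteq V$, a $V'$-interval from $x$ to $y$ is a finite path $n_1\ldots n_k$ in $G$ with $k\ge 2$, $n_1=x\in V'$, $n_k=y\in V'$, and $n_i\notin V'$ for $1<i<k$. $A_p$ is the directed graph with node set $V_p$ and an edge $(x,y)$ iff there is a $V_p$-interval from $x$ to $y$ in $G$. For $i\in\{1,2\}$, $V_i$ is the set of nodes $n\in V_p$ such that there is a finite path in $G$ from $s_i$ to $n$ whose nodes other than the last one all lie outside $V_p$ (possibly $n=s_i$). An $s_i$-strip is a finite path $n\ldots m$ in $A_p$ whose first node lies in $V_i$ and all of whose other nodes lie in $V_p\setminus V_i$ (i.e., it belongs to $V_i.(V_p\setminus V_i)^*$), such that the successor of $m$ in $A_p$ is a node in $V_i$. *)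

theory Defs
  imports Main
begin

definition cfg :: "'v set \<Rightarrow> ('v \<times> 'v) set \<Rightarrow> bool" where
  "cfg V E \<longleftrightarrow> finite V \<and> E \<subseteq> V \<times> V \<and> (\<forall>x. card {y. (x, y) \<in> E} \<le> 2)"

definition succs :: "('v \<times> 'v) set \<Rightarrow> 'v \<Rightarrow> 'v set" where
  "succs E x = {y. (x, y) \<in> E}"

definition fpath :: "('v \<times> 'v) set \<Rightarrow> 'v list \<Rightarrow> bool" where
  "fpath E xs \<longleftrightarrow> xs \<noteq> [] \<and> (\<forall>j. Suc j < length xs \<longrightarrow> (xs ! j, xs ! Suc j) \<in> E)"

definition ipath :: "('v \<times> 'v) set \<Rightarrow> (nat \<Rightarrow> 'v) \<Rightarrow> bool" where
  "ipath E f \<longleftrightarrow> (\<forall>j. (f j, f (Suc j)) \<in> E)"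

definition fmaxpath :: "('v \<times> 'v) set \<Rightarrow> 'v \<Rightarrow> 'v list \<Rightarrow> bool" where
  "fmaxpath E n xs \<longleftrightarrow> fpath E xs \<and> hd xs = n \<and> succs E (last xs) = {}"

definition imaxpath :: "('v \<times> 'v) set \<Rightarrow> 'v \<Rightarrow> (nat \<Rightarrow> 'v) \<Rightarrow> bool" where
  "imaxpath E n f \<longleftrightarrow> ipath E f \<and> f 0 = n"

definition Vp :: "'v set \<Rightarrow> ('v \<times> 'v) set \<Rightarrow> 'v \<Rightarrow> 'v set" where
  "Vp V E p = {v \<in> V. (\<forall>xs. fmaxpath E p xs \<longrightarrow> v \<in> set xs)
                      \<and> (\<forall>f. imaxpath E p f \<longrightarrow> v \<in> range f)}"

definition interval :: "('v \<times> 'v) set \<Rightarrow> 'v set \<Rightarrow> 'v \<Rightarrow> 'v \<Rightarrow> 'v list \<Rightarrow> bool" where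
  "interval E W x y xs \<longleftrightarrow> fpath E xs \<and> length xs \<ge> 2 \<and> hd xs = x \<and> last xs = y
     \<and> x \<in> W \<and> y \<in> W \<and> (\<forall>j. 0 < j \<and> j < length xs - 1 \<longrightarrow> xs ! j \<notin> W)"

text \<open>Edge set of the graph A_p (its node set is V_p).\<close>
definition Ap :: "'v set \<Rightarrow> ('v \<times> 'v) set \<Rightarrow> 'v \<Rightarrow> ('v \<times> 'v) set" where
  "Ap V E p = {(x, y). x \<in> Vp V E p \<and> y \<in> Vp V E p \<and> (\<exists>xs. interval E (Vp V E p) x y xs)}"

text \<open>V_i for the successor s = s_i: nodes of V_p reachable from s by a finite path whose
  nodes other than the last lie outside V_p.\<close>
definition Vsucc :: "'v set \<Rightarrow> ('v \<times> 'v) set \<Rightarrow> 'v \<Rightarrow> 'v \<Rightarrow> 'v set" where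
  "Vsucc V E p s = {n \<in> Vp V E p. \<exists>xs. fpath E xs \<and> hd xs = s \<and> last xs = n
        \<and> (\<forall>j. j < length xs - 1 \<longrightarrow> xs ! j \<notin> Vp V E p)}"

definition strip :: "'v set \<Rightarrow> ('v \<times> 'v) set \<Rightarrow> 'v \<Rightarrow> 'v \<Rightarrow> 'v list \<Rightarrow> bool" where
  "strip V E p s xs \<longleftrightarrow> fpath (Ap V E p) xs
     \<and> hd xs \<in> Vsucc V E p s
     \<and> (\<forall>j. 0 < j \<and> j < length xs \<longrightarrow> xs ! j \<in> Vp V E p - Vsucc V E p s)
     \<and> succs (Ap V E p) (last xs) \<noteq> {}
     \<and> succs (Ap V E p) (last xs) \<subseteq> Vsucc V E p s"

definition all_before :: "('v \<times> 'v) set \<Rightarrow> 'v \<Rightarrow> 'v \<Rightarrow> 'v \<Rightarrow> bool" where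
  "all_before E s a b \<longleftrightarrow>
     (\<forall>xs. fmaxpath E s xs \<longrightarrow> (\<exists>j < length xs. xs ! j = a \<and> (\<forall>k \<le> j. xs ! k \<noteq> b)))
   \<and> (\<forall>f. imaxpath E s f \<longrightarrow> (\<exists>j. f j = a \<and> (\<forall>k \<le> j. f k \<noteq> b)))"

end

theory Submission
  imports Defs
begin

definition esc :: "('v \<times> 'v) set \<Rightarrow> 'v \<Rightarrow> 'v set \<Rightarrow> bool" where
  "esc E x W \<longleftrightarrow> (\<exists>xs. fmaxpath E x xs \<and> set xs \<inter> W = {}) \<or> (\<exists>f. imaxpath E x f \<and> range f \<inter> W = {})"

lemma fpath_single[simp]: "fpath E [x]"
  by (simp add: fpath_def)

lemma fpath_Cons2[simp]: "fpath E (x # y # xs) \<longleftrightarrow> (x, y) \<in> E \<and> fpath E (y # xs)"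
proof -
  have "(\<forall>j. Suc j < length (x#y#xs) \<longrightarrow> ((x#y#xs)!j, (x#y#xs)!Suc j) \<in> E) \<longleftrightarrow>
    ((x,y)\<in>E \<and> (\<forall>j. Suc j < length (y#xs) \<longrightarrow> ((y#xs)!j, (y#xs)!Suc j) \<in> E))" (is "?L \<longleftrightarrow> ?R")
  proof
    assume L: ?L
    show ?R
    proof
      show "(x,y) \<in> E" using spec[OF L, of 0] by simp
      show "\<forall>j. Suc j < length (y#xs) \<longrightarrow> ((y#xs)!j, (y#xs)!Suc j) \<in> E"
      proof (intro allI impI)
        fix j assume "Suc j < length (y#xs)"
        then show "((y#xs)!j, (y#xs)!Suc j) \<in> E" using spec[OF L, of "Suc j"] by simp
      qed
    qed
  next
    assume R: ?R
    show ?L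
    proof (intro allI impI)
      fix j assume "Suc j < length (x#y#xs)"
      then show "((x#y#xs)!j, (x#y#xs)!Suc j) \<in> E" using R by (cases j) auto
    qed
  qed
  then show ?thesis unfolding fpath_def by simp
qed

lemma fpath_append: "fpath E xs \<Longrightarrow> fpath E ys \<Longrightarrow> last xs = hd ys \<Longrightarrow> fpath E (xs @ tl ys)"
proof (induction xs)
  case Nil then show ?case by (simp add: fpath_def)
next
  case (Cons x xs)
  show ?case
  proof (cases xs)
    case Nil
    then show ?thesis using Cons.prems by (cases ys; cases "tl ys"; auto simp: fpath_def)
  next
    case (Cons y zs)
    then show ?thesis using Cons.prems Cons.IH by auto
  qed
qed

lemma fpath_take: "fpath E xs \<Longrightarrow> i < length xs \<Longrightarrow> fpath E (take (Suc i) xs)"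
  by (auto simp: fpath_def)

lemma fpath_drop: "fpath E xs \<Longrightarrow> i < length xs \<Longrightarrow> fpath E (drop i xs)"
  by (auto simp: fpath_def)

lemma fpath_edge: "fpath E xs \<Longrightarrow> Suc j < length xs \<Longrightarrow> (xs ! j, xs ! Suc j) \<in> E"
  by (auto simp: fpath_def)

lemma fpath_ne: "fpath E xs \<Longrightarrow> xs \<noteq> []"
  by (auto simp: fpath_def)

lemma esc_hd: "esc E x W \<Longrightarrow> x \<notin> W"
  unfolding esc_def fmaxpath_def imaxpath_def
  by (metis disjoint_iff hd_in_set fpath_def rangeI)

lemma esc_mono: "esc E x A \<Longrightarrow> B \<subseteq> A \<Longrightarrow> esc E x B"
  unfolding esc_def by blast

lemma last_append_tl: "xs \<noteq> [] \<Longrightarrow> ys \<noteq> [] \<Longrightarrow> last xs = hd ys \<Longrightarrow> last (xs @ tl ys) = last ys"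
  by (cases ys) auto

lemma esc_prepend:
  assumes "fpath E \<alpha>" "hd \<alpha> = w" "last \<alpha> = x" "set \<alpha> \<inter> W = {}" "esc E x W"
  shows "esc E w W"
proof -
  have ne: "\<alpha> \<noteq> []" using assms(1) by (simp add: fpath_def)
  from assms(5) consider (F) xs where "fmaxpath E x xs" "set xs \<inter> W = {}"
    | (I) f where "imaxpath E x f" "range f \<inter> W = {}" unfolding esc_def by blast
  then show ?thesis
  proof cases
    case F
    have xne: "xs \<noteq> []" using F(1) by (simp add: fmaxpath_def fpath_def)
    have "fmaxpath E w (\<alpha> @ tl xs)"
      using F(1) assms ne xne fpath_append[of E \<alpha> xs] last_append_tl[of \<alpha> xs]
      by (auto simp: fmaxpath_def)
    moreover have "set (\<alpha> @ tl xs) \<inter> W = {}"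
      using F(2) assms(4) xne by (auto dest: list.set_sel(2))
    ultimately show ?thesis unfolding esc_def by blast
  next
    case I
    define g where "g n = (if n < length \<alpha> then \<alpha> ! n else f (n - length \<alpha> + 1))" for n
    have "ipath E g"
      unfolding ipath_def
    proof
      fix n
      consider "Suc n < length \<alpha>" | "Suc n = length \<alpha>" | "Suc n > length \<alpha>" by linarith
      then show "(g n, g (Suc n)) \<in> E"
      proof cases
        case 1 then show ?thesis using assms(1) by (simp add: g_def fpath_def)
      next
        case 2
        then have nn: "n = length \<alpha> - 1" by simp
        then have "g n = f 0" using assms(3) I(1) ne
          by (simp add: g_def imaxpath_def last_conv_nth)
        moreover have "g (Suc n) = f 1" using 2 by (simp add: g_def)
        ultimately show ?thesis using I(1) unfolding imaxpath_def ipath_def by (metis One_nat_def)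
      next
        case 3
        then have "g n = f (n - length \<alpha> + 1)" "g (Suc n) = f (Suc (n - length \<alpha> + 1))"
          by (auto simp: g_def Suc_diff_le)
        then show ?thesis using I(1) by (simp add: imaxpath_def ipath_def)
      qed
    qed
    moreover have "g 0 = w" using ne assms(2) by (simp add: g_def hd_conv_nth)
    moreover have "range g \<inter> W = {}"
      using assms(4) I(2) by (auto simp: g_def dest: nth_mem)
    ultimately show ?thesis unfolding esc_def imaxpath_def by blast
  qed
qed

lemma esc_split:
  assumes "esc E x A" "\<not> esc E x B"
  shows "\<exists>w\<in>B. esc E w A \<and> (\<exists>\<alpha>. fpath E \<alpha> \<and> hd \<alpha> = x \<and> last \<alpha> = w \<and> set \<alpha> \<inter> A = {}
            \<and> (\<forall>j<length \<alpha> - 1. \<alpha> ! j \<notin> B))"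
proof -
  from assms(1) consider (F) xs where "fmaxpath E x xs" "set xs \<inter> A = {}"
    | (I) f where "imaxpath E x f" "range f \<inter> A = {}" unfolding esc_def by blast
  then show ?thesis
  proof cases
    case F
    have "\<exists>i. i < length xs \<and> xs ! i \<in> B"
      using assms(2) F unfolding esc_def by (metis disjoint_iff in_set_conv_nth)
    define i where "i = (LEAST i. i < length xs \<and> xs ! i \<in> B)"
    have i: "i < length xs" "xs ! i \<in> B"
      using LeastI_ex[OF \<open>\<exists>i. _\<close>] unfolding i_def by auto
    have imin: "\<And>j. j < i \<Longrightarrow> xs ! j \<notin> B"
      using not_less_Least i(1) unfolding i_def by fastforce
    have "fmaxpath E (xs ! i) (drop i xs)"
      using F(1) i by (auto simp: fmaxpath_def fpath_drop hd_drop_conv_nth)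
    moreover have "set (drop i xs) \<inter> A = {}" using F(2) set_drop_subset by fast
    ultimately have "esc E (xs ! i) A" unfolding esc_def by blast
    moreover have "fpath E (take (Suc i) xs)" using F(1) i fpath_take by (auto simp: fmaxpath_def)
    moreover have "hd (take (Suc i) xs) = x" using F(1) i
      by (auto simp: fmaxpath_def fpath_def hd_conv_nth)
    moreover have "last (take (Suc i) xs) = xs ! i" using i
      by (simp add: take_Suc_conv_app_nth)
    moreover have "set (take (Suc i) xs) \<inter> A = {}" using F(2) set_take_subset by fast
    moreover have "\<forall>j<length (take (Suc i) xs) - 1. take (Suc i) xs ! j \<notin> B"
      using imin i by auto
    ultimately show ?thesis using i by blast
  next
    case I
    have "\<exists>i. f i \<in> B"
      using assms(2) I unfolding esc_def by blast
    define i where "i = (LEAST i. f i \<in> B)"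
    have i: "f i \<in> B" using LeastI_ex[OF \<open>\<exists>i. _\<close>] unfolding i_def by auto
    have imin: "\<And>j. j < i \<Longrightarrow> f j \<notin> B"
      using not_less_Least unfolding i_def by fastforce
    have "imaxpath E (f i) (\<lambda>n. f (n + i))"
      using I(1) by (auto simp: imaxpath_def ipath_def)
    moreover have "range (\<lambda>n. f (n + i)) \<inter> A = {}" using I(2) by auto
    ultimately have "esc E (f i) A" unfolding esc_def by blast
    moreover have "fpath E (map f [0..<Suc i])"
      using I(1) by (auto simp: fpath_def imaxpath_def ipath_def simp del: upt_Suc)
    moreover have "hd (map f [0..<Suc i]) = x" using I(1) by (simp add: imaxpath_def hd_map del: upt_Suc)
    moreover have "last (map f [0..<Suc i]) = f i" by simp
    moreover have "set (map f [0..<Suc i]) \<inter> A = {}" using I(2) by auto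
    moreover have "\<forall>j<length (map f [0..<Suc i]) - 1. map f [0..<Suc i] ! j \<notin> B"
      using imin by (auto simp del: upt_Suc)
    ultimately show ?thesis using i by blast
  qed
qed

lemma esc_exists: "esc E x {}"
proof -
  define nx where "nx y = (SOME z. (y, z) \<in> E)" for y
  define g where "g n = (nx ^^ n) x" for n
  have gs: "g (Suc n) = nx (g n)" for n by (simp add: g_def)
  have step: "succs E (g n) \<noteq> {} \<Longrightarrow> (g n, g (Suc n)) \<in> E" for n
    unfolding gs nx_def succs_def by (auto intro: someI)
  show ?thesis
  proof (cases "\<forall>n. succs E (g n) \<noteq> {}")
    case True
    then have "imaxpath E x g" using step by (auto simp: imaxpath_def ipath_def g_def)
    then show ?thesis unfolding esc_def by blast
  next
    case False
    then have ex: "\<exists>n. succs E (g n) = {}" by blast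
    define n0 where "n0 = (LEAST n. succs E (g n) = {})"
    have n0: "succs E (g n0) = {}" using LeastI_ex[OF ex] unfolding n0_def .
    have lt: "\<And>j. j < n0 \<Longrightarrow> succs E (g j) \<noteq> {}"
      using not_less_Least unfolding n0_def by blast
    have la: "last (map g [0..<Suc n0]) = g n0" by simp
    have "fpath E (map g [0..<Suc n0])"
      unfolding fpath_def using step lt by (auto simp del: upt_Suc)
    then have "fmaxpath E x (map g [0..<Suc n0])"
      unfolding fmaxpath_def using la n0 by (simp add: g_def hd_map del: upt_Suc)
    then show ?thesis unfolding esc_def by blast
  qed
qed

lemma esc_cycle:
  assumes "fpath E \<gamma>" "length \<gamma> \<ge> 2" "hd \<gamma> = x" "last \<gamma> = x" "set \<gamma> \<inter> W = {}"
  shows "esc E x W"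
proof -
  define L where "L = length \<gamma> - 1"
  have L: "L \<ge> 1" using assms(2) by (simp add: L_def)
  define g where "g n = \<gamma> ! (n mod L)" for n
  have "ipath E g"
    unfolding ipath_def
  proof
    fix n
    have m: "n mod L < L" using L by simp
    show "(g n, g (Suc n)) \<in> E"
    proof (cases "Suc (n mod L) < L")
      case True
      then have "Suc n mod L = Suc (n mod L)" by (simp add: mod_Suc)
      then show ?thesis using True assms(1) by (simp add: g_def fpath_def L_def)
    next
      case False
      then have "Suc n mod L = 0" using m by (simp add: mod_Suc)
      moreover have "Suc (n mod L) = L" using False m by simp
      moreover have "\<gamma> ! L = \<gamma> ! 0" using assms(1,3,4)
        by (simp add: L_def fpath_def hd_conv_nth last_conv_nth)
      moreover have "(\<gamma> ! (n mod L), \<gamma> ! Suc (n mod L)) \<in> E"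
        using assms(1) m by (simp add: fpath_def L_def)
      ultimately show ?thesis by (simp add: g_def)
    qed
  qed
  moreover have "g 0 = x" using assms(1,3) by (simp add: g_def fpath_def hd_conv_nth)
  moreover have "range g \<inter> W = {}"
  proof -
    have "n mod L < length \<gamma>" for n using L mod_less_divisor[of L n] unfolding L_def by linarith
    then have "g n \<in> set \<gamma>" for n by (simp add: g_def)
    then show ?thesis using assms(5) by blast
  qed
  ultimately show ?thesis unfolding esc_def imaxpath_def by blast
qed

lemma esc_reach:
  assumes "\<not> esc E x B"
  shows "\<exists>\<alpha>. fpath E \<alpha> \<and> hd \<alpha> = x \<and> last \<alpha> \<in> B \<and> (\<forall>j<length \<alpha> - 1. \<alpha> ! j \<notin> B)"
  using esc_split[OF esc_exists assms] by blast


lemma first_occ: "x \<in> set \<rho> \<Longrightarrow> x \<in> S \<Longrightarrow> \<exists>m<length \<rho>. \<rho> ! m \<in> S \<and> (\<forall>j<m. \<rho> ! j \<notin> S)"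
proof (induction \<rho>)
  case Nil then show ?case by simp
next
  case (Cons y ys)
  show ?case
  proof (cases "y \<in> S")
    case True then show ?thesis by (intro exI[of _ 0]) auto
  next
    case False
    then have "x \<in> set ys" using Cons.prems by auto
    then obtain m where "m < length ys" "ys ! m \<in> S" "\<forall>j<m. ys ! j \<notin> S" using Cons by blast
    then show ?thesis using False
      by (intro exI[of _ "Suc m"]) (auto simp: less_Suc_eq_0_disj)
  qed
qed

lemma last_occ: "x \<in> set \<rho> \<Longrightarrow> x \<in> S \<Longrightarrow> \<exists>m<length \<rho>. \<rho> ! m \<in> S \<and> (\<forall>j. m < j \<and> j < length \<rho> \<longrightarrow> \<rho> ! j \<notin> S)"
proof (induction \<rho> arbitrary: x)
  case Nil then show ?case by simp
next
  case (Cons y ys)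
  show ?case
  proof (cases "set ys \<inter> S = {}")
    case True
    then have "y \<in> S" using Cons.prems by auto
    then show ?thesis using True
      by (intro exI[of _ 0]) (auto dest!: nth_mem simp: nth_Cons split: nat.splits)
  next
    case False
    then obtain z where "z \<in> set ys" "z \<in> S" by blast
    then obtain m where "m < length ys" "ys ! m \<in> S" "\<forall>j. m < j \<and> j < length ys \<longrightarrow> ys ! j \<notin> S"
      using Cons.IH by blast
    then show ?thesis
      apply (intro exI[of _ "Suc m"])
      apply (auto simp: nth_Cons split: nat.splits)
      done
  qed
qed

lemma last_occ_drop:
  assumes "m < length \<rho>" "\<forall>j. m < j \<and> j < length \<rho> \<longrightarrow> \<rho> ! j \<notin> S" "y \<in> S" "y \<noteq> \<rho> ! m"
  shows "y \<notin> set (drop m \<rho>)"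
proof
  assume "y \<in> set (drop m \<rho>)"
  then obtain k where k: "k < length \<rho> - m" "drop m \<rho> ! k = y" by (auto simp: in_set_conv_nth)
  then have "\<rho> ! (m + k) = y" using assms(1) by simp
  then show False using assms k by (cases "k = 0") auto
qed

lemma first_occ_take:
  assumes "m < length \<rho>" "\<forall>j<m. \<rho> ! j \<notin> S" "y \<in> S" "y \<noteq> \<rho> ! m"
  shows "y \<notin> set (take (Suc m) \<rho>)"
proof
  assume "y \<in> set (take (Suc m) \<rho>)"
  then obtain k where k: "k < Suc m" "take (Suc m) \<rho> ! k = y" using assms(1)
    by (auto simp: in_set_conv_nth)
  then have "\<rho> ! k = y" by simp
  then show False using assms k by (cases "k = m") auto
qed

lemma interval_set: "interval E W x y xs \<Longrightarrow> z \<in> set xs \<Longrightarrow> z \<in> W \<Longrightarrow> z = x \<or> z = y"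
  unfolding interval_def
  apply (clarsimp simp: in_set_conv_nth)
  subgoal for j
    apply (cases "j = 0")
     apply (simp add: hd_conv_nth fpath_def)
    apply (cases "j = length xs - 1")
     apply (simp add: last_conv_nth fpath_def)
    apply auto
    done
  done

lemma interval_seg:
  assumes "fpath E \<rho>" "i' < i" "i < length \<rho>" "\<forall>j. i' < j \<and> j < i \<longrightarrow> \<rho> ! j \<notin> W"
    "\<rho> ! i' \<in> W" "\<rho> ! i \<in> W"
  shows "interval E W (\<rho> ! i') (\<rho> ! i) (take (Suc i - i') (drop i' \<rho>))"
  unfolding interval_def
proof (intro conjI)
  show "fpath E (take (Suc i - i') (drop i' \<rho>))"
    using assms(1-3) by (auto simp: fpath_def)
  show "2 \<le> length (take (Suc i - i') (drop i' \<rho>))" using assms(2,3) by simp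
  show "hd (take (Suc i - i') (drop i' \<rho>)) = \<rho> ! i'" using assms(2,3)
    by (simp add: hd_conv_nth)
  have len: "length (take (Suc i - i') (drop i' \<rho>)) = Suc i - i'" using assms(2,3) by simp
  then show "last (take (Suc i - i') (drop i' \<rho>)) = \<rho> ! i" using assms(2,3)
    by (subst last_conv_nth) (auto simp: fpath_def)
  show "\<forall>j. 0 < j \<and> j < length (take (Suc i - i') (drop i' \<rho>)) - 1 \<longrightarrow>
          take (Suc i - i') (drop i' \<rho>) ! j \<notin> W"
  proof (intro allI impI)
    fix j assume j: "0 < j \<and> j < length (take (Suc i - i') (drop i' \<rho>)) - 1"
    then have "take (Suc i - i') (drop i' \<rho>) ! j = \<rho> ! (i' + j)" using assms(2,3) by (subst nth_take) auto
    moreover have "i' < i' + j" "i' + j < i" using j assms(2,3) by auto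
    ultimately show "take (Suc i - i') (drop i' \<rho>) ! j \<notin> W" using assms(4) by simp
  qed
qed (use assms(5,6) in simp_all)


locale cfgp =
  fixes V :: "'v set" and E :: "('v \<times> 'v) set" and p u v :: 'v
  assumes fin: "finite V" and EV: "E \<subseteq> V \<times> V"
    and pu: "(p, u) \<in> Ap V E p" and pv: "(p, v) \<in> Ap V E p" and uv: "u \<noteq> v"
begin

abbreviation P where "P \<equiv> Vp V E p"

lemma inP: "y \<in> P \<longleftrightarrow> y \<in> V \<and> \<not> esc E p {y}"
  unfolding Vp_def esc_def by blast

lemma notesc: "y \<in> P \<Longrightarrow> \<not> esc E p {y}"
  using inP by blast

lemma ApD: "(x, y) \<in> Ap V E p \<Longrightarrow> x \<in> P \<and> y \<in> P \<and> (\<exists>xs. interval E P x y xs)"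
  unfolding Ap_def by blast

lemma ApI: "interval E P x y xs \<Longrightarrow> (x, y) \<in> Ap V E p"
  unfolding Ap_def interval_def by blast

lemma intervalD: "interval E W x y xs \<Longrightarrow> fpath E xs \<and> length xs \<ge> 2 \<and> hd xs = x \<and> last xs = y"
  unfolding interval_def by blast

lemma P_reach: "y \<in> P \<Longrightarrow> \<exists>\<alpha>. fpath E \<alpha> \<and> hd \<alpha> = p \<and> last \<alpha> = y"
  using esc_reach[of E p "{y}"] inP by blast

lemma closed_all:
  assumes "fpath E \<gamma>" "length \<gamma> \<ge> 2" "hd \<gamma> = p" "last \<gamma> = p" "y \<in> P"
  shows "y \<in> set \<gamma>"
  using esc_cycle[OF assms(1-4), of "{y}"] assms(5) inP by blast

lemma succ_ne_p_aux:
  assumes "(p, w) \<in> Ap V E p" "(p, w') \<in> Ap V E p" "w \<noteq> w'"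
  shows "w \<noteq> p"
proof
  assume wp: "w = p"
  obtain I where I: "interval E P p w I" using ApD[OF assms(1)] by blast
  have "w' \<in> P" using ApD[OF assms(2)] by blast
  moreover have Id: "fpath E I" "length I \<ge> 2" "hd I = p" "last I = p" using intervalD[OF I] wp by auto
  moreover have "w' \<in> set I"
    using closed_all[OF Id \<open>w' \<in> P\<close>] .
  ultimately have "w' = p \<or> w' = w" using interval_set[OF I] by blast
  then show False using wp assms(3) by auto
qed

lemma u_ne_p: "u \<noteq> p" using succ_ne_p_aux[OF pu pv uv] .
lemma v_ne_p: "v \<noteq> p" using succ_ne_p_aux[OF pv pu] uv by blast

lemma no_loop_aux:
  assumes "fpath E \<gamma>" "length \<gamma> \<ge> 2" "hd \<gamma> = p" "last \<gamma> = p"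
    and w: "(p, w) \<in> Ap V E p" and w': "w' \<in> P" "w' \<noteq> p" "w' \<noteq> w"
    and i: "i < length \<gamma>" "\<gamma> ! i = w"
  shows "\<exists>j. i < j \<and> j < length \<gamma> \<and> \<gamma> ! j = w'"
proof -
  obtain I where I: "interval E P p w I" using ApD[OF w] by blast
  note Id = intervalD[OF I]
  have dne: "drop i \<gamma> \<noteq> []" using i by simp
  have hdd: "hd (drop i \<gamma>) = w" using i by (simp add: hd_drop_conv_nth)
  define \<delta> where "\<delta> = I @ tl (drop i \<gamma>)"
  have "fpath E \<delta>" unfolding \<delta>_def
    using fpath_append[of E I "drop i \<gamma>"] Id fpath_drop[OF assms(1) i(1)] hdd by simp
  moreover have "length \<delta> \<ge> 2" using Id by (simp add: \<delta>_def)
  moreover have "hd \<delta> = p" using Id by (auto simp: \<delta>_def fpath_def)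
  moreover have "last \<delta> = p" unfolding \<delta>_def
    using last_append_tl[of I "drop i \<gamma>"] Id dne hdd assms(4) i by (auto simp: fpath_def)
  ultimately have "w' \<in> set \<delta>" using closed_all[OF _ _ _ _ w'(1)] by presburger
  moreover have "w' \<notin> set I" using interval_set[OF I] w' by blast
  ultimately have "w' \<in> set (drop (Suc i) \<gamma>)" by (simp add: \<delta>_def drop_Suc tl_drop)
  then obtain k where "k < length \<gamma> - Suc i" "drop (Suc i) \<gamma> ! k = w'"
    by (auto simp: in_set_conv_nth)
  then show ?thesis by (intro exI[of _ "Suc i + k"]) auto
qed

lemma no_loop:
  assumes "fpath E \<gamma>" "length \<gamma> \<ge> 2" "hd \<gamma> = p" "last \<gamma> = p"
  shows False
proof -
  have uP: "u \<in> P" using ApD[OF pu] by blast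
  have vP: "v \<in> P" using ApD[OF pv] by blast
  have "u \<in> set \<gamma>" using closed_all[OF assms uP] .
  then obtain lu where lu: "lu < length \<gamma>" "\<gamma> ! lu = u" "\<forall>j. lu < j \<and> j < length \<gamma> \<longrightarrow> \<gamma> ! j \<notin> {u}"
    using last_occ[of u \<gamma> "{u}"] by auto
  obtain j where j: "lu < j" "j < length \<gamma>" "\<gamma> ! j = v"
    using no_loop_aux[OF assms pu vP v_ne_p uv[symmetric] lu(1,2)] by blast
  obtain j' where j': "j < j'" "j' < length \<gamma>" "\<gamma> ! j' = u"
    using no_loop_aux[OF assms pv uP u_ne_p uv j(2,3)] by blast
  show False using lu(3) j j' by auto
qed

lemma no_ret:
  assumes "fpath E \<alpha>" "hd \<alpha> = p" "last \<alpha> = x" "fpath E \<beta>" "hd \<beta> = x" "last \<beta> = p"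
    "length \<alpha> + length \<beta> \<ge> 3"
  shows False
proof -
  have ne: "\<alpha> \<noteq> []" "\<beta> \<noteq> []" using assms(1,4) by (auto simp: fpath_def)
  have a1: "fpath E (\<alpha> @ tl \<beta>)" using fpath_append[OF assms(1,4)] assms(3,5) by simp
  have a2: "length (\<alpha> @ tl \<beta>) \<ge> 2" using assms(7) ne by (cases \<beta>) auto
  have a3: "hd (\<alpha> @ tl \<beta>) = p" using ne assms(2) by simp
  have a4: "last (\<alpha> @ tl \<beta>) = p" using last_append_tl[OF ne] assms(3,5,6) by simp
  show False using no_loop[OF a1 a2 a3 a4] .
qed

lemma Ap_ne_p: "(x, w) \<in> Ap V E p \<Longrightarrow> w \<noteq> p"
proof
  assume a: "(x, w) \<in> Ap V E p" "w = p"
  obtain I where I: "interval E P x w I" using ApD[OF a(1)] by blast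
  obtain \<alpha> where \<alpha>: "fpath E \<alpha>" "hd \<alpha> = p" "last \<alpha> = x" using P_reach ApD[OF a(1)] by blast
  have "length \<alpha> \<ge> 1" using \<alpha>(1) by (cases \<alpha>) (auto simp: fpath_def)
  moreover have Id: "fpath E I" "length I \<ge> 2" "hd I = x" "last I = p" using intervalD[OF I] a(2) by auto
  ultimately have "length \<alpha> + length I \<ge> 3" by linarith
  then show False using no_ret[OF \<alpha> Id(1) Id(3) Id(4)] by blast
qed

lemma M1:
  assumes "(p, w) \<in> Ap V E p" "y \<in> P" "y \<noteq> p"
  shows "\<not> esc E w {y}"
proof
  assume e: "esc E w {y}"
  then have "y \<noteq> w" using esc_hd[OF e] by auto
  obtain I where I: "interval E P p w I" using ApD[OF assms(1)] by blast
  have Id: "fpath E I" "hd I = p" "last I = w" using intervalD[OF I] by auto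
  have "set I \<inter> {y} = {}" using interval_set[OF I] assms \<open>y \<noteq> w\<close> by blast
  then have "esc E p {y}" by (rule esc_prepend[OF Id _ e])
  then show False using notesc[OF assms(2)] by blast
qed

lemma M_uv_aux:
  assumes w: "(p, w) \<in> Ap V E p" and w': "w' \<in> P" "w' \<noteq> p" "w' \<noteq> w"
    and \<alpha>: "fpath E \<alpha>" "hd \<alpha> = w" "last \<alpha> = x" "w' \<notin> set \<alpha>" and e: "esc E x {w'}"
  shows False
proof -
  obtain I where I: "interval E P p w I" using ApD[OF w] by blast
  note Id = intervalD[OF I]
  have ne: "\<alpha> \<noteq> []" using \<alpha> by (auto simp: fpath_def)
  have c1: "fpath E (I @ tl \<alpha>)" using fpath_append[of E I \<alpha>] Id \<alpha> by simp
  have c2: "hd (I @ tl \<alpha>) = p" using Id by (auto simp: fpath_def)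
  have c3: "last (I @ tl \<alpha>) = x" using last_append_tl[of I \<alpha>] Id \<alpha> ne by (auto simp: fpath_def)
  have c4: "set (I @ tl \<alpha>) \<inter> {w'} = {}"
    using interval_set[OF I] w' \<alpha>(4) ne by (auto dest: list.set_sel(2))
  have "esc E p {w'}" using esc_prepend[OF c1 c2 c3 c4 e] .
  then show False using notesc[OF w'(1)] by blast
qed

lemma M_uv:
  assumes "x \<in> P" "x \<noteq> p"
  shows "\<not> esc E x {u, v}"
proof
  assume e: "esc E x {u, v}"
  obtain \<alpha> where \<alpha>: "fpath E \<alpha>" "hd \<alpha> = u" "last \<alpha> = x"
    using esc_reach[OF M1[OF pu assms]] by blast
  have "u \<in> set \<alpha>" using \<alpha> by (auto simp: fpath_def)
  then obtain m where m: "m < length \<alpha>" "\<alpha> ! m \<in> {u, v}" "\<forall>j. m < j \<and> j < length \<alpha> \<longrightarrow> \<alpha> ! j \<notin> {u, v}"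
    using last_occ[of u \<alpha> "{u, v}"] by blast
  have d: "fpath E (drop m \<alpha>)" "hd (drop m \<alpha>) = \<alpha> ! m" "last (drop m \<alpha>) = x"
    using fpath_drop[OF \<alpha>(1) m(1)] m(1) \<alpha>(3) by (auto simp: hd_drop_conv_nth)
  have uP: "u \<in> P" using ApD[OF pu] by blast
  have vP: "v \<in> P" using ApD[OF pv] by blast
  show False
  proof (cases "\<alpha> ! m = u")
    case True
    have "v \<notin> set (drop m \<alpha>)" using last_occ_drop[OF m(1) m(3)] True uv by auto
    moreover have "esc E x {v}" using esc_mono[OF e, of "{v}"] by simp
    ultimately show False using M_uv_aux[OF pu vP v_ne_p uv[symmetric] d[unfolded True]] by blast
  next
    case False
    then have mv: "\<alpha> ! m = v" using m(2) by auto
    have "u \<notin> set (drop m \<alpha>)" using last_occ_drop[OF m(1) m(3)] mv uv by auto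
    moreover have "esc E x {u}" using esc_mono[OF e, of "{u}"] by simp
    ultimately show False using M_uv_aux[OF pv uP u_ne_p uv d[unfolded mv]] by blast
  qed
qed

lemma M:
  assumes "x \<in> P" "x \<noteq> p" "y \<in> P" "y \<noteq> p"
  shows "\<not> esc E x {y}"
proof
  assume e: "esc E x {y}"
  obtain w where "w \<in> {u, v}" "esc E w {y}" using esc_split[OF e M_uv[OF assms(1,2)]] by blast
  then show False using M1[OF pu assms(3,4)] M1[OF pv assms(3,4)] by blast
qed

lemma path_to:
  assumes "x \<in> P" "x \<noteq> p" "y \<in> P" "y \<noteq> p"
  shows "\<exists>\<rho>. fpath E \<rho> \<and> hd \<rho> = x \<and> last \<rho> = y"
  using esc_reach[OF M[OF assms]] by blast

lemma other:
  obtains y where "y \<in> P" "y \<noteq> p" "y \<noteq> x"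
  using ApD[OF pu] ApD[OF pv] u_ne_p v_ne_p uv by metis

lemma Ap_self:
  assumes "x \<in> P" "x \<noteq> p"
  shows "(x, x) \<notin> Ap V E p"
proof
  assume "(x, x) \<in> Ap V E p"
  then obtain J where J: "interval E P x x J" using ApD by blast
  obtain y where y: "y \<in> P" "y \<noteq> p" "y \<noteq> x" using other by blast
  have "set J \<inter> {y} = {}" using interval_set[OF J] y by blast
  moreover have Jd: "fpath E J" "length J \<ge> 2" "hd J = x" "last J = x" using intervalD[OF J] by auto
  ultimately have "esc E x {y}" using esc_cycle[OF Jd] by blast
  then show False using M[OF assms y(1,2)] by blast
qed

lemma Ap_ex:
  assumes "x \<in> P" "x \<noteq> p"
  shows "\<exists>y. (x, y) \<in> Ap V E p"
proof -
  obtain y where y: "y \<in> P" "y \<noteq> p" "y \<noteq> x" using other by blast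
  obtain \<rho> where \<rho>: "fpath E \<rho>" "hd \<rho> = x" "last \<rho> = y" using path_to[OF assms y(1,2)] by blast
  have ne: "\<rho> \<noteq> []" using \<rho> by (auto simp: fpath_def)
  have len: "length \<rho> \<ge> 2"
  proof (rule ccontr)
    assume "\<not> 2 \<le> length \<rho>"
    moreover have "length \<rho> > 0" using ne by simp
    ultimately have "length \<rho> = 1" by linarith
    then have "hd \<rho> = last \<rho>" by (cases \<rho>) auto
    then show False using \<rho> y by simp
  qed
  have ex: "\<exists>i. 0 < i \<and> i < length \<rho> \<and> \<rho> ! i \<in> P"
    using len \<rho>(3) y(1) ne by (intro exI[of _ "length \<rho> - 1"]) (auto simp: last_conv_nth)
  define i where "i = (LEAST i. 0 < i \<and> i < length \<rho> \<and> \<rho> ! i \<in> P)"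
  have i: "0 < i" "i < length \<rho>" "\<rho> ! i \<in> P" using LeastI_ex[OF ex] unfolding i_def by auto
  have imin: "\<forall>j. 0 < j \<and> j < i \<longrightarrow> \<rho> ! j \<notin> P"
    using not_less_Least i(2) unfolding i_def by fastforce
  have "\<rho> ! 0 = x" using \<rho> ne by (simp add: hd_conv_nth)
  then have "interval E P x (\<rho> ! i) (take (Suc i - 0) (drop 0 \<rho>))"
    using interval_seg[OF \<rho>(1) i(1,2) imin] i(3) assms(1) by simp
  then show ?thesis using ApI by blast
qed

lemma U:
  assumes x: "x \<in> P" "x \<noteq> p" and xy: "(x, y) \<in> Ap V E p"
    and z: "z \<in> P" "z \<noteq> p" "z \<noteq> x" "z \<noteq> y"
    and \<rho>: "fpath E \<rho>" "hd \<rho> = y" "last \<rho> = x"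
  shows "z \<in> set \<rho>"
proof (rule ccontr)
  assume nz: "z \<notin> set \<rho>"
  obtain J where J: "interval E P x y J" using ApD[OF xy] by blast
  note Jd = intervalD[OF J]
  have ne: "\<rho> \<noteq> []" using \<rho> by (auto simp: fpath_def)
  have "fpath E (J @ tl \<rho>)" using fpath_append[of E J \<rho>] Jd \<rho> by simp
  moreover have "length (J @ tl \<rho>) \<ge> 2" using Jd by simp
  moreover have "hd (J @ tl \<rho>) = x" using Jd by (auto simp: fpath_def)
  moreover have "last (J @ tl \<rho>) = x" using last_append_tl[of J \<rho>] Jd \<rho> ne by (auto simp: fpath_def)
  moreover have "set (J @ tl \<rho>) \<inter> {z} = {}"
    using interval_set[OF J] z nz ne by (auto dest: list.set_sel(2))
  ultimately have "esc E x {z}" by (rule esc_cycle)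
  then show False using M[OF x z(1,2)] by blast
qed

lemma Ap_uniq:
  assumes x: "x \<in> P" "x \<noteq> p" and xy: "(x, y) \<in> Ap V E p" and xz: "(x, z) \<in> Ap V E p"
  shows "y = z"
proof (rule ccontr)
  assume yz: "y \<noteq> z"
  have yP: "y \<in> P" "y \<noteq> p" "y \<noteq> x" using ApD[OF xy] Ap_ne_p[OF xy] Ap_self[OF x] xy by auto
  have zP: "z \<in> P" "z \<noteq> p" "z \<noteq> x" using ApD[OF xz] Ap_ne_p[OF xz] Ap_self[OF x] xz by auto
  obtain \<rho> where \<rho>: "fpath E \<rho>" "hd \<rho> = y" "last \<rho> = x" using path_to[OF yP(1,2) x] by blast
  have "y \<in> set \<rho>" using \<rho> by (auto simp: fpath_def)
  then obtain m where m: "m < length \<rho>" "\<rho> ! m \<in> {y, z}" "\<forall>j. m < j \<and> j < length \<rho> \<longrightarrow> \<rho> ! j \<notin> {y, z}"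
    using last_occ[of y \<rho> "{y, z}"] by blast
  have d: "fpath E (drop m \<rho>)" "hd (drop m \<rho>) = \<rho> ! m" "last (drop m \<rho>) = x"
    using fpath_drop[OF \<rho>(1) m(1)] m(1) \<rho>(3) by (auto simp: hd_drop_conv_nth)
  show False
  proof (cases "\<rho> ! m = y")
    case True
    have "z \<notin> set (drop m \<rho>)" using last_occ_drop[OF m(1) m(3)] True yz by auto
    then show False using U[OF x xy zP yz[symmetric] d[unfolded True]] by blast
  next
    case False
    then have mz: "\<rho> ! m = z" using m(2) by auto
    have "y \<notin> set (drop m \<rho>)" using last_occ_drop[OF m(1) m(3)] mz yz by auto
    then show False using U[OF x xz yP yz d[unfolded mz]] by blast
  qed
qed

lemma Ap_inj:
  assumes x: "x \<in> P" "x \<noteq> p" and y: "y \<in> P" "y \<noteq> p"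
    and xz: "(x, z) \<in> Ap V E p" and yz: "(y, z) \<in> Ap V E p"
  shows "x = y"
proof (rule ccontr)
  assume xy: "x \<noteq> y"
  have zP: "z \<in> P" "z \<noteq> p" using ApD[OF xz] Ap_ne_p[OF xz] by auto
  have zx: "z \<noteq> x" using Ap_self[OF x] xz by auto
  have zy: "z \<noteq> y" using Ap_self[OF y] yz by auto
  obtain \<rho> where \<rho>: "fpath E \<rho>" "hd \<rho> = z" "last \<rho> = x" using path_to[OF zP x] by blast
  have ne: "\<rho> \<noteq> []" using \<rho> by (auto simp: fpath_def)
  have "x \<in> set \<rho>" using \<rho> ne by auto
  then obtain m where m: "m < length \<rho>" "\<rho> ! m \<in> {x, y}" "\<forall>j<m. \<rho> ! j \<notin> {x, y}"
    using first_occ[of x \<rho> "{x, y}"] by blast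
  have d1: "fpath E (take (Suc m) \<rho>)" using fpath_take[OF \<rho>(1) m(1)] .
  have d2: "hd (take (Suc m) \<rho>) = z" using \<rho>(2) ne by (cases \<rho>) auto
  have d3: "last (take (Suc m) \<rho>) = \<rho> ! m" using m(1) by (simp add: take_Suc_conv_app_nth)
  note d = d1 d2 d3
  show False
  proof (cases "\<rho> ! m = x")
    case True
    have "y \<notin> set (take (Suc m) \<rho>)" using first_occ_take[OF m(1) m(3)] True xy by auto
    then show False using U[OF x xz y xy[symmetric] zy[symmetric] d[unfolded True]] by blast
  next
    case False
    then have my: "\<rho> ! m = y" using m(2) by auto
    have "x \<notin> set (take (Suc m) \<rho>)" using first_occ_take[OF m(1) m(3)] my xy by auto
    then show False using U[OF y yz x xy zx[symmetric] d[unfolded my]] by blast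
  qed
qed

end


context cfgp
begin

definition f where "f x = (SOME y. (x, y) \<in> Ap V E p)"

lemma f_Ap: "x \<in> P \<Longrightarrow> x \<noteq> p \<Longrightarrow> (x, f x) \<in> Ap V E p"
  unfolding f_def using Ap_ex by (metis someI_ex)

lemma f_unique: "x \<in> P \<Longrightarrow> x \<noteq> p \<Longrightarrow> (x, y) \<in> Ap V E p \<Longrightarrow> y = f x"
  using Ap_uniq f_Ap by blast

lemma succs_Ap: "x \<in> P \<Longrightarrow> x \<noteq> p \<Longrightarrow> succs (Ap V E p) x = {f x}"
  unfolding succs_def using f_Ap f_unique by blast

lemma f_P: "x \<in> P \<Longrightarrow> x \<noteq> p \<Longrightarrow> f x \<in> P \<and> f x \<noteq> p"
  using f_Ap ApD Ap_ne_p by blast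

lemma fn_P: "x \<in> P \<Longrightarrow> x \<noteq> p \<Longrightarrow> (f ^^ n) x \<in> P \<and> (f ^^ n) x \<noteq> p"
  by (induction n) (auto dest: f_P)

lemma f_inj: "x \<in> P \<Longrightarrow> x \<noteq> p \<Longrightarrow> y \<in> P \<Longrightarrow> y \<noteq> p \<Longrightarrow> f x = f y \<Longrightarrow> x = y"
  using Ap_inj f_Ap by metis

lemma fn_inj: "x \<in> P \<Longrightarrow> x \<noteq> p \<Longrightarrow> y \<in> P \<Longrightarrow> y \<noteq> p \<Longrightarrow> (f ^^ n) x = (f ^^ n) y \<Longrightarrow> x = y"
proof (induction n)
  case 0 then show ?case by simp
next
  case (Suc n)
  have a: "(f^^n) x \<in> P" "(f^^n) x \<noteq> p" using fn_P[OF Suc.prems(1,2)] by auto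
  have b: "(f^^n) y \<in> P" "(f^^n) y \<noteq> p" using fn_P[OF Suc.prems(3,4)] by auto
  have "f ((f^^n) x) = f ((f^^n) y)" using Suc.prems(5) by simp
  then have "(f^^n) x = (f^^n) y" by (rule f_inj[OF a b])
  then show ?case using Suc.IH Suc.prems(1-4) by blast
qed

lemma fn_add: "(f ^^ (m + n)) x = (f ^^ m) ((f ^^ n) x)"
  by (simp add: funpow_add)

lemma period:
  assumes "x \<in> P" "x \<noteq> p"
  shows "\<exists>N>0. (f ^^ N) x = x"
proof -
  have fP: "finite P" using fin by (rule finite_subset[rotated]) (auto simp: Vp_def)
  have sub: "(\<lambda>k. (f ^^ k) x) ` {0..card P} \<subseteq> P" using fn_P[OF assms] by auto
  have "\<not> inj_on (\<lambda>k. (f ^^ k) x) {0..card P}"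
  proof
    assume "inj_on (\<lambda>k. (f ^^ k) x) {0..card P}"
    from card_inj_on_le[OF this sub fP] show False by simp
  qed
  then obtain i j where ij: "i \<noteq> j" "(f ^^ i) x = (f ^^ j) x" unfolding inj_on_def by blast
  have "\<exists>i j. i < j \<and> (f ^^ i) x = (f ^^ j) x"
    using ij by (metis linorder_neqE_nat)
  then obtain i j where ij: "i < j" "(f ^^ i) x = (f ^^ j) x" by blast
  then have "(f ^^ i) ((f ^^ (j - i)) x) = (f ^^ i) x"
    using fn_add[of i "j - i" x] by simp
  moreover have a: "(f ^^ (j - i)) x \<in> P" "(f ^^ (j - i)) x \<noteq> p" using fn_P[OF assms] by auto
  ultimately have "(f ^^ (j - i)) x = x" using fn_inj[OF a assms] by blast
  then show ?thesis using ij by (intro exI[of _ "j - i"]) auto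
qed

lemma period_mult:
  assumes "(f ^^ N) x = x"
  shows "(f ^^ (c * N)) x = x"
proof (induction c)
  case 0 then show ?case by simp
next
  case (Suc c)
  have "(f ^^ (Suc c * N)) x = (f ^^ N) ((f ^^ (c * N)) x)" using fn_add[of N "c * N" x] by simp
  then show ?case using Suc assms by simp
qed

lemma R:
  assumes \<rho>: "fpath E \<rho>" "hd \<rho> = x" and x: "x \<in> P" "x \<noteq> p"
  shows "i < length \<rho> \<Longrightarrow> \<rho> ! i \<in> P \<Longrightarrow> \<exists>n. \<rho> ! i = (f ^^ n) x \<and> (\<forall>k\<le>n. (f ^^ k) x \<in> set (take (Suc i) \<rho>))"
proof (induction i rule: less_induct)
  case (less i)
  have ne: "\<rho> \<noteq> []" using \<rho> by (auto simp: fpath_def)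
  show ?case
  proof (cases "i = 0")
    case True
    have "\<rho> ! i = x" using True \<rho> ne by (simp add: hd_conv_nth)
    moreover have "x \<in> set (take (Suc i) \<rho>)" using True ne \<rho>(2) by (cases \<rho>) auto
    ultimately show ?thesis by (intro exI[of _ 0]) auto
  next
    case False
    have ex: "\<exists>j. j < i \<and> \<rho> ! j \<in> P" using False \<rho> ne x by (intro exI[of _ 0]) (auto simp: hd_conv_nth)
    define i' where "i' = (GREATEST j. j < i \<and> \<rho> ! j \<in> P)"
    have bnd: "\<And>y. y < i \<and> \<rho> ! y \<in> P \<Longrightarrow> y \<le> i" by auto
    have i': "i' < i" "\<rho> ! i' \<in> P" using GreatestI_ex_nat[OF ex bnd] unfolding i'_def by auto
    have imax: "\<forall>j. i' < j \<and> j < i \<longrightarrow> \<rho> ! j \<notin> P"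
      using Greatest_le_nat[of "\<lambda>j. j < i \<and> \<rho> ! j \<in> P" _ i] unfolding i'_def by fastforce
    obtain n where n: "\<rho> ! i' = (f ^^ n) x" "\<forall>k\<le>n. (f ^^ k) x \<in> set (take (Suc i') \<rho>)"
      using less.IH[OF i'(1) _ i'(2)] i'(1) less.prems(1) by auto
    have "interval E P (\<rho> ! i') (\<rho> ! i) (take (Suc i - i') (drop i' \<rho>))"
      using interval_seg[OF \<rho>(1) i'(1) less.prems(1) imax i'(2) less.prems(2)] .
    then have "(\<rho> ! i', \<rho> ! i) \<in> Ap V E p" using ApI by blast
    then have eq: "\<rho> ! i = (f ^^ Suc n) x" using f_unique fn_P[OF x, of n] n(1) by auto
    have sub: "set (take (Suc i') \<rho>) \<subseteq> set (take (Suc i) \<rho>)"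
      using i'(1) by (metis Suc_le_mono less_imp_le_nat set_take_subset_set_take)
    have "\<rho> ! i \<in> set (take (Suc i) \<rho>)" using less.prems(1)
      by (simp add: take_Suc_conv_app_nth)
    then have "\<forall>k\<le>Suc n. (f ^^ k) x \<in> set (take (Suc i) \<rho>)"
      using n(2) sub eq by (auto simp: le_Suc_eq)
    then show ?thesis using eq by blast
  qed
qed

end


definition avoidpath :: "('v \<times> 'v) set \<Rightarrow> 'v \<Rightarrow> 'v \<Rightarrow> 'v \<Rightarrow> bool" where
  "avoidpath E s a b \<longleftrightarrow> (\<exists>Q. fpath E Q \<and> hd Q = s \<and> last Q = b \<and> a \<notin> set Q)"

lemma fpath_Cons: "fpath E xs \<Longrightarrow> (x, hd xs) \<in> E \<Longrightarrow> fpath E (x # xs)"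
  by (cases xs) (auto dest: fpath_ne)

lemma card2: "card A \<ge> 2 \<Longrightarrow> \<exists>u v. u \<in> A \<and> v \<in> A \<and> u \<noteq> v"
proof (rule ccontr)
  assume c: "card A \<ge> 2" and n: "\<not> (\<exists>u v. u \<in> A \<and> v \<in> A \<and> u \<noteq> v)"
  have "A \<subseteq> {SOME x. x \<in> A}" using n by (metis singletonI someI_ex subsetI)
  then have "card A \<le> card {SOME x. x \<in> A}" by (intro card_mono) auto
  then show False using c by simp
qed

lemma all_before_iff:
  assumes na: "\<not> esc E s {a}" and ab: "a \<noteq> b"
  shows "all_before E s a b \<longleftrightarrow> \<not> avoidpath E s a b"
proof
  assume AB: "all_before E s a b"
  show "\<not> avoidpath E s a b"
  proof
    assume "avoidpath E s a b"
    then obtain Q where Q: "fpath E Q" "hd Q = s" "last Q = b" "a \<notin> set Q"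
      unfolding avoidpath_def by blast
    have ne: "Q \<noteq> []" using Q by (auto simp: fpath_def)
    have lQ: "Q ! (length Q - 1) = b" using Q(3) ne by (simp add: last_conv_nth)
    from esc_exists[of E b] consider (F) ys where "fmaxpath E b ys"
      | (I) g where "imaxpath E b g" unfolding esc_def by blast
    then show False
    proof cases
      case F
      have yne: "ys \<noteq> []" using F by (simp add: fmaxpath_def fpath_def)
      have "fmaxpath E s (Q @ tl ys)"
        using F Q ne yne fpath_append[of E Q ys] last_append_tl[of Q ys]
        by (auto simp: fmaxpath_def)
      then obtain j where j: "j < length (Q @ tl ys)" "(Q @ tl ys) ! j = a"
        "\<forall>k\<le>j. (Q @ tl ys) ! k \<noteq> b"
        using AB unfolding all_before_def by blast
      show False
      proof (cases "j < length Q")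
        case True
        then show ?thesis using j(2) Q(4) by (simp add: nth_append) (metis nth_mem)
      next
        case False
        then have "length Q - 1 \<le> j" by simp
        then have "(Q @ tl ys) ! (length Q - 1) \<noteq> b" using j(3) by blast
        then show ?thesis using lQ ne by (simp add: nth_append)
      qed
    next
      case I
      define h where "h n = (if n < length Q then Q ! n else g (n - length Q + 1))" for n
      have "ipath E h"
        unfolding ipath_def
      proof
        fix n
        consider "Suc n < length Q" | "Suc n = length Q" | "Suc n > length Q" by linarith
        then show "(h n, h (Suc n)) \<in> E"
        proof cases
          case 1 then show ?thesis using Q(1) by (simp add: h_def fpath_def)
        next
          case 2
          then have nn: "n = length Q - 1" by simp
          then have "h n = g 0" using Q(3) I ne
            by (simp add: h_def imaxpath_def last_conv_nth)
          moreover have "h (Suc n) = g 1" using 2 by (simp add: h_def)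
          ultimately show ?thesis using I unfolding imaxpath_def ipath_def by (metis One_nat_def)
        next
          case 3
          then have "h n = g (n - length Q + 1)" "h (Suc n) = g (Suc (n - length Q + 1))"
            by (auto simp: h_def Suc_diff_le)
          then show ?thesis using I by (simp add: imaxpath_def ipath_def)
        qed
      qed
      moreover have "h 0 = s" using ne Q(2) by (simp add: h_def hd_conv_nth)
      ultimately have "imaxpath E s h" by (simp add: imaxpath_def)
      then obtain j where j: "h j = a" "\<forall>k\<le>j. h k \<noteq> b"
        using AB unfolding all_before_def by blast
      show False
      proof (cases "j < length Q")
        case True
        then show ?thesis using j(1) Q(4) by (simp add: h_def) (metis nth_mem)
      next
        case False
        then have "length Q - 1 \<le> j" by simp
        then have "h (length Q - 1) \<noteq> b" using j(2) by blast
        then show ?thesis using lQ ne by (simp add: h_def)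
      qed
    qed
  qed
next
  assume N: "\<not> avoidpath E s a b"
  show "all_before E s a b"
    unfolding all_before_def
  proof (intro conjI allI impI)
    fix xs assume F: "fmaxpath E s xs"
    have "a \<in> set xs" using na F unfolding esc_def by blast
    then obtain j where j: "j < length xs" "xs ! j \<in> {a}" "\<forall>k<j. xs ! k \<notin> {a}"
      using first_occ[of a xs "{a}"] by blast
    have "\<forall>k\<le>j. xs ! k \<noteq> b"
    proof (intro allI impI)
      fix k assume k: "k \<le> j"
      show "xs ! k \<noteq> b"
      proof
        assume xb: "xs ! k = b"
        then have kj: "k < j" using k j(2) ab by (cases "k = j") auto
        have "fpath E (take (Suc k) xs)" using F kj j(1) by (intro fpath_take) (auto simp: fmaxpath_def)
        moreover have "hd (take (Suc k) xs) = s" using F by (cases xs) (auto simp: fmaxpath_def fpath_def)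
        moreover have "last (take (Suc k) xs) = b" using xb kj j(1) by (simp add: take_Suc_conv_app_nth)
        moreover have "a \<notin> set (take (Suc k) xs)"
        proof
          assume "a \<in> set (take (Suc k) xs)"
          then obtain i where "i < Suc k" "i < length xs" "xs ! i = a" by (auto simp: in_set_conv_nth)
          then show False using j(3) kj by auto
        qed
        ultimately show False using N unfolding avoidpath_def by blast
      qed
    qed
    then show "\<exists>j<length xs. xs ! j = a \<and> (\<forall>k\<le>j. xs ! k \<noteq> b)" using j by blast
  next
    fix g assume I: "imaxpath E s g"
    have ex: "\<exists>j. g j = a" using na I unfolding esc_def by blast
    define j where "j = (LEAST j. g j = a)"
    have ja: "g j = a" using LeastI_ex[OF ex] unfolding j_def .
    have jmin: "\<And>k. k < j \<Longrightarrow> g k \<noteq> a" using not_less_Least unfolding j_def by blast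
    have "\<forall>k\<le>j. g k \<noteq> b"
    proof (intro allI impI)
      fix k assume k: "k \<le> j"
      show "g k \<noteq> b"
      proof
        assume xb: "g k = b"
        then have kj: "k < j" using k ja ab by (cases "k = j") auto
        have "fpath E (map g [0..<Suc k])"
          using I by (auto simp: fpath_def imaxpath_def ipath_def simp del: upt_Suc)
        moreover have "hd (map g [0..<Suc k]) = s" using I by (simp add: imaxpath_def hd_map del: upt_Suc)
        moreover have "last (map g [0..<Suc k]) = b" using xb by simp
        moreover have "a \<notin> set (map g [0..<Suc k])"
        proof
          assume "a \<in> set (map g [0..<Suc k])"
          then obtain i where "i < Suc k" "g i = a" by (auto simp del: upt_Suc)
          then show False using jmin[of i] kj by simp
        qed
        ultimately show False using N unfolding avoidpath_def by blast
      qed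
    qed
    then show "\<exists>j. g j = a \<and> (\<forall>k\<le>j. g k \<noteq> b)" using ja by blast
  qed
qed


context cfgp
begin

lemma Vi_sub:
  assumes ps: "(p, s) \<in> E" and h: "h \<in> Vsucc V E p s"
  shows "h \<in> P \<and> h \<noteq> p"
proof -
  obtain \<alpha> where \<alpha>: "fpath E \<alpha>" "hd \<alpha> = s" "last \<alpha> = h" and hP: "h \<in> P"
    using h unfolding Vsucc_def by blast
  have "h \<noteq> p"
  proof
    assume hp: "h = p"
    have ne: "\<alpha> \<noteq> []" using \<alpha> fpath_ne by blast
    have "fpath E (p # \<alpha>)" using fpath_Cons[OF \<alpha>(1)] ps \<alpha>(2) by simp
    moreover have "last (p # \<alpha>) = p" using ne \<alpha>(3) hp by simp
    moreover have "length [p] + length (p # \<alpha>) \<ge> 3" using ne by (cases \<alpha>) auto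
    ultimately show False using no_ret[of "[p]" p "p # \<alpha>"] by simp
  qed
  then show ?thesis using hP by blast
qed

lemma s_notesc:
  assumes ps: "(p, s) \<in> E" and a: "a \<in> P" "a \<noteq> p"
  shows "\<not> esc E s {a}"
proof
  assume e: "esc E s {a}"
  then have "s \<noteq> a" using esc_hd by fastforce
  have "fpath E [p, s]" using ps by simp
  moreover have "set [p, s] \<inter> {a} = {}" using a(2) \<open>s \<noteq> a\<close> by auto
  ultimately have "esc E p {a}" using esc_prepend[of E "[p, s]" p s "{a}"] e by simp
  then show False using notesc[OF a(1)] by blast
qed

lemma Vi_ne:
  assumes ps: "(p, s) \<in> E"
  shows "\<exists>h. h \<in> Vsucc V E p s"
proof -
  have uP: "u \<in> P" using ApD[OF pu] by blast
  have "\<not> esc E s P"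
  proof
    assume "esc E s P"
    then have "esc E s {u}" using esc_mono[of E s P "{u}"] uP by blast
    then show False using s_notesc[OF ps uP u_ne_p] by blast
  qed
  from esc_reach[OF this] obtain \<alpha> where
    "fpath E \<alpha>" "hd \<alpha> = s" "last \<alpha> \<in> P" "\<forall>j<length \<alpha> - 1. \<alpha> ! j \<notin> P" by blast
  then have "last \<alpha> \<in> Vsucc V E p s" unfolding Vsucc_def by blast
  then show ?thesis by blast
qed

lemma F_to:
  assumes ps: "(p, s) \<in> E" and b: "b \<in> P" and N: "avoidpath E s a b"
  shows "\<exists>h \<in> Vsucc V E p s. \<exists>n. (f ^^ n) h = b \<and> (\<forall>k\<le>n. (f ^^ k) h \<noteq> a)"
proof -
  obtain Q where Q: "fpath E Q" "hd Q = s" "last Q = b" "a \<notin> set Q"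
    using N unfolding avoidpath_def by blast
  have ne: "Q \<noteq> []" using Q fpath_ne by blast
  have "b \<in> set Q" using Q(3) ne by auto
  then obtain m where m: "m < length Q" "Q ! m \<in> P" "\<forall>j<m. Q ! j \<notin> P"
    using first_occ[of b Q P] b by blast
  have "fpath E (take (Suc m) Q)" using fpath_take[OF Q(1) m(1)] .
  moreover have "hd (take (Suc m) Q) = s" using Q(2) ne by (cases Q) auto
  moreover have "last (take (Suc m) Q) = Q ! m" using m(1) by (simp add: take_Suc_conv_app_nth)
  moreover have "\<forall>j<length (take (Suc m) Q) - 1. take (Suc m) Q ! j \<notin> P" using m by auto
  ultimately have hV: "Q ! m \<in> Vsucc V E p s" unfolding Vsucc_def using m(2) by blast
  have hP: "Q ! m \<in> P" "Q ! m \<noteq> p" using Vi_sub[OF ps hV] by auto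
  have d: "fpath E (drop m Q)" "hd (drop m Q) = Q ! m" using fpath_drop[OF Q(1) m(1)] m(1)
    by (auto simp: hd_drop_conv_nth)
  have ld: "drop m Q ! (length (drop m Q) - 1) = b" using Q(3) m(1) ne
    using last_conv_nth[OF ne] by simp
  have "length (drop m Q) - 1 < length (drop m Q)" using m(1) by simp
  from R[OF d hP this] ld b obtain n where
    n: "b = (f ^^ n) (Q ! m)" "\<forall>k\<le>n. (f ^^ k) (Q ! m) \<in> set (take (Suc (length (drop m Q) - 1)) (drop m Q))"
    by auto
  have "\<forall>k\<le>n. (f ^^ k) (Q ! m) \<noteq> a"
  proof (intro allI impI)
    fix k assume "k \<le> n"
    then have "(f ^^ k) (Q ! m) \<in> set Q" using n(2) by (meson in_set_takeD in_set_dropD)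
    then show "(f ^^ k) (Q ! m) \<noteq> a" using Q(4) by blast
  qed
  then show ?thesis using hV n(1) by metis
qed

lemma chain:
  assumes x: "x \<in> P" "x \<noteq> p"
  shows "\<exists>\<beta>. fpath E \<beta> \<and> hd \<beta> = x \<and> last \<beta> = (f ^^ n) x \<and> (\<forall>z\<in>set \<beta>. z \<in> P \<longrightarrow> (\<exists>k\<le>n. z = (f ^^ k) x))"
proof (induction n)
  case 0
  then show ?case by (intro exI[of _ "[x]"]) auto
next
  case (Suc n)
  then obtain \<beta> where \<beta>: "fpath E \<beta>" "hd \<beta> = x" "last \<beta> = (f ^^ n) x"
    "\<forall>z\<in>set \<beta>. z \<in> P \<longrightarrow> (\<exists>k\<le>n. z = (f ^^ k) x)" by blast
  have xn: "(f ^^ n) x \<in> P" "(f ^^ n) x \<noteq> p" using fn_P[OF x] by auto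
  obtain J where J: "interval E P ((f ^^ n) x) (f ((f ^^ n) x)) J" using ApD[OF f_Ap[OF xn]] by blast
  note Jd = intervalD[OF J]
  have ne: "\<beta> \<noteq> []" "J \<noteq> []" using \<beta>(1) Jd fpath_ne by auto
  have "fpath E (\<beta> @ tl J)" using fpath_append[of E \<beta> J] \<beta> Jd by simp
  moreover have "hd (\<beta> @ tl J) = x" using ne \<beta>(2) by simp
  moreover have "last (\<beta> @ tl J) = (f ^^ Suc n) x" using last_append_tl[OF ne] \<beta>(3) Jd by simp
  moreover have "\<forall>z\<in>set (\<beta> @ tl J). z \<in> P \<longrightarrow> (\<exists>k\<le>Suc n. z = (f ^^ k) x)"
  proof (intro ballI impI)
    fix z assume z: "z \<in> set (\<beta> @ tl J)" "z \<in> P"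
    show "\<exists>k\<le>Suc n. z = (f ^^ k) x"
    proof (cases "z \<in> set \<beta>")
      case True
      then show ?thesis using \<beta>(4) z(2) le_Suc_eq by blast
    next
      case False
      then have "z \<in> set J" using z(1) ne(2) by (auto dest: list.set_sel(2))
      then have "z = (f ^^ n) x \<or> z = f ((f ^^ n) x)" using interval_set[OF J] z(2) by blast
      then show ?thesis by (metis funpow.simps(2) o_apply le_Suc_eq order_refl)
    qed
  qed
  ultimately show ?case by blast
qed

lemma F_from:
  assumes ps: "(p, s) \<in> E" and h: "h \<in> Vsucc V E p s" and a: "a \<in> P"
    and na: "\<forall>k\<le>n. (f ^^ k) h \<noteq> a"
  shows "avoidpath E s a ((f ^^ n) h)"
proof -
  obtain \<alpha> where \<alpha>: "fpath E \<alpha>" "hd \<alpha> = s" "last \<alpha> = h" "\<forall>j<length \<alpha> - 1. \<alpha> ! j \<notin> P"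
    using h unfolding Vsucc_def by blast
  have hP: "h \<in> P" "h \<noteq> p" using Vi_sub[OF ps h] by auto
  obtain \<beta> where \<beta>: "fpath E \<beta>" "hd \<beta> = h" "last \<beta> = (f ^^ n) h"
    "\<forall>z\<in>set \<beta>. z \<in> P \<longrightarrow> (\<exists>k\<le>n. z = (f ^^ k) h)" using chain[OF hP] by blast
  have ne: "\<alpha> \<noteq> []" "\<beta> \<noteq> []" using \<alpha>(1) \<beta>(1) fpath_ne by auto
  have "a \<notin> set \<alpha>"
  proof
    assume "a \<in> set \<alpha>"
    then obtain j where j: "j < length \<alpha>" "\<alpha> ! j = a" by (auto simp: in_set_conv_nth)
    show False
    proof (cases "j < length \<alpha> - 1")
      case True then show False using \<alpha>(4) j a by auto
    next
      case False
      then have "j = length \<alpha> - 1" using j by simp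
      then have "a = h" using j \<alpha>(3) ne by (simp add: last_conv_nth)
      then show False using na by (metis funpow_0 le0)
    qed
  qed
  moreover have "a \<notin> set \<beta>" using \<beta>(4) na a by blast
  ultimately have "a \<notin> set (\<alpha> @ tl \<beta>)" using ne by (auto dest: list.set_sel(2))
  moreover have "fpath E (\<alpha> @ tl \<beta>)" using fpath_append[of E \<alpha> \<beta>] \<alpha> \<beta> by simp
  moreover have "hd (\<alpha> @ tl \<beta>) = s" using ne \<alpha>(2) by simp
  moreover have "last (\<alpha> @ tl \<beta>) = (f ^^ n) h" using last_append_tl[OF ne] \<alpha>(3) \<beta>(2,3) by simp
  ultimately show ?thesis unfolding avoidpath_def by blast
qed

end


context cfgp
begin

lemma strip_iter:
  assumes ps: "(p, s) \<in> E" and st: "strip V E p s xs"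
  shows "\<forall>i<length xs. xs ! i = (f ^^ i) (hd xs)"
proof -
  have fp: "fpath (Ap V E p) xs" and hV: "hd xs \<in> Vsucc V E p s" using st unfolding strip_def by auto
  have hP: "hd xs \<in> P" "hd xs \<noteq> p" using Vi_sub[OF ps hV] by auto
  have ne: "xs \<noteq> []" using fp fpath_ne by blast
  show ?thesis
  proof (intro allI impI)
    fix i assume "i < length xs"
    then show "xs ! i = (f ^^ i) (hd xs)"
    proof (induction i)
      case 0 then show ?case using ne by (simp add: hd_conv_nth)
    next
      case (Suc i)
      then have IH: "xs ! i = (f ^^ i) (hd xs)" by simp
      have "(xs ! i, xs ! Suc i) \<in> Ap V E p" using fpath_edge[OF fp Suc.prems] .
      moreover have "xs ! i \<in> P" "xs ! i \<noteq> p" using IH fn_P[OF hP] by auto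
      ultimately have "xs ! Suc i = f (xs ! i)" using f_unique by blast
      then show ?case using IH by simp
    qed
  qed
qed

lemma core1:
  assumes ps: "(p, s) \<in> E" and st: "strip V E p s xs" and jk: "j < k" "k < length xs"
    and xa: "xs ! j = a" and xb: "xs ! k = b" and b: "b \<in> P"
  shows "\<not> avoidpath E s a b"
proof
  assume N: "avoidpath E s a b"
  define h where "h = hd xs"
  have it: "\<forall>i<length xs. xs ! i = (f ^^ i) h" using strip_iter[OF ps st] h_def by simp
  have hV: "h \<in> Vsucc V E p s" using st unfolding strip_def h_def by auto
  have hP: "h \<in> P" "h \<noteq> p" using Vi_sub[OF ps hV] by auto
  obtain h' n where h': "h' \<in> Vsucc V E p s" "(f ^^ n) h' = b" "\<forall>k\<le>n. (f ^^ k) h' \<noteq> a"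
    using F_to[OF ps b N] by blast
  have h'P: "h' \<in> P" "h' \<noteq> p" using Vi_sub[OF ps h'(1)] by auto
  have a_eq: "(f ^^ j) h = a" using it jk xa by auto
  have b_eq: "(f ^^ k) h = b" using it jk xb by auto
  show False
  proof (cases "k \<le> n")
    case True
    have "(f ^^ k) ((f ^^ (n - k)) h') = (f ^^ k) h"
      using fn_add[of k "n - k" h'] True h'(2) b_eq by simp
    moreover have c: "(f ^^ (n - k)) h' \<in> P" "(f ^^ (n - k)) h' \<noteq> p" using fn_P[OF h'P] by auto
    ultimately have "(f ^^ (n - k)) h' = h" using fn_inj[OF c hP] by blast
    then have "(f ^^ (j + (n - k))) h' = a" using fn_add[of j "n - k" h'] a_eq by simp
    moreover have "j + (n - k) \<le> n" using jk True by simp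
    ultimately show False using h'(3) by blast
  next
    case False
    have "(f ^^ n) ((f ^^ (k - n)) h) = (f ^^ n) h'"
      using fn_add[of n "k - n" h] False h'(2) b_eq by simp
    moreover have c: "(f ^^ (k - n)) h \<in> P" "(f ^^ (k - n)) h \<noteq> p" using fn_P[OF hP] by auto
    ultimately have "(f ^^ (k - n)) h = h'" using fn_inj[OF c h'P] by blast
    moreover have "xs ! (k - n) = (f ^^ (k - n)) h" using it jk by auto
    moreover have "xs ! (k - n) \<notin> Vsucc V E p s"
      using st False jk unfolding strip_def by auto
    ultimately show False using h'(1) by simp
  qed
qed

lemma core2:
  assumes ps: "(p, s) \<in> E" and a: "a \<in> P" "a \<noteq> p" and b: "b \<in> P" "b \<noteq> p" and ab: "a \<noteq> b"
    and N: "\<not> avoidpath E s a b"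
  shows "\<exists>xs j k. strip V E p s xs \<and> j < k \<and> k < length xs \<and> xs ! j = a \<and> xs ! k = b"
proof -
  obtain h0 where h0: "h0 \<in> Vsucc V E p s" using Vi_ne[OF ps] by blast
  have h0P: "h0 \<in> P" "h0 \<noteq> p" using Vi_sub[OF ps h0] by auto
  obtain \<rho> where \<rho>: "fpath E \<rho>" "hd \<rho> = h0" "last \<rho> = b" using path_to[OF h0P b] by blast
  have ne: "\<rho> \<noteq> []" using \<rho> fpath_ne by blast
  have "\<rho> ! (length \<rho> - 1) = b" using \<rho>(3) ne last_conv_nth by metis
  then obtain n where n: "b = (f ^^ n) h0"
    using R[OF \<rho>(1,2) h0P, of "length \<rho> - 1"] ne b by auto
  define q where "q = (GREATEST q. q \<le> n \<and> (f ^^ q) h0 \<in> Vsucc V E p s)"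
  have exq: "\<exists>q. q \<le> n \<and> (f ^^ q) h0 \<in> Vsucc V E p s" using h0 by (intro exI[of _ 0]) auto
  have bndq: "\<And>y. y \<le> n \<and> (f ^^ y) h0 \<in> Vsucc V E p s \<Longrightarrow> y \<le> n" by auto
  have q: "q \<le> n" "(f ^^ q) h0 \<in> Vsucc V E p s" using GreatestI_ex_nat[OF exq bndq] unfolding q_def by auto
  have qmax: "\<And>y. y \<le> n \<Longrightarrow> (f ^^ y) h0 \<in> Vsucc V E p s \<Longrightarrow> y \<le> q"
    unfolding q_def by (rule Greatest_le_nat) auto
  have "(f ^^ (n - q)) ((f ^^ q) h0) = b" using fn_add[of "n - q" q h0] q(1) n by simp
  then have "\<not> (\<forall>k\<le>n - q. (f ^^ k) ((f ^^ q) h0) \<noteq> a)"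
    using F_from[OF ps q(2) a(1), of "n - q"] N by auto
  then obtain k0 where k0: "k0 \<le> n - q" "(f ^^ k0) ((f ^^ q) h0) = a" by blast
  have "(f ^^ (k0 + q)) h0 = a" using k0(2) fn_add[of k0 q h0] by simp
  then have k0a: "(f ^^ (q + k0)) h0 = a" by (metis add.commute)
  have "q + k0 \<le> n" using k0(1) q(1) by linarith
  moreover have "q + k0 \<noteq> n" using k0a n ab by auto
  ultimately have k0n: "q + k0 < n" by linarith
  obtain N0 where N0: "N0 > 0" "(f ^^ N0) h0 = h0" using period[OF h0P] by blast
  have "(f ^^ (Suc n * N0)) h0 = h0" using period_mult[OF N0(2)] .
  moreover have "n < Suc n * N0"
  proof -
    have "Suc n * 1 \<le> Suc n * N0" using N0(1) by (intro mult_le_mono2) simp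
    then have "Suc n \<le> Suc n * N0" by (simp only: mult_1_right)
    then show ?thesis by linarith
  qed
  ultimately have exm: "\<exists>m. n < m \<and> (f ^^ m) h0 \<in> Vsucc V E p s" using h0 by metis
  define m' where "m' = (LEAST m. n < m \<and> (f ^^ m) h0 \<in> Vsucc V E p s)"
  have m': "n < m'" "(f ^^ m') h0 \<in> Vsucc V E p s" using LeastI_ex[OF exm] unfolding m'_def by auto
  have m'min: "\<And>y. y < m' \<Longrightarrow> n < y \<Longrightarrow> (f ^^ y) h0 \<notin> Vsucc V E p s"
    using not_less_Least unfolding m'_def by blast
  define xs where "xs = map (\<lambda>k. (f ^^ (q + k)) h0) [0..<m' - q]"
  have len: "length xs = m' - q" by (simp add: xs_def)
  have nth: "\<And>i. i < m' - q \<Longrightarrow> xs ! i = (f ^^ (q + i)) h0" by (simp add: xs_def)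
  have lenpos: "m' - q > 0" using m' q by simp
  have "fpath (Ap V E p) xs"
    unfolding fpath_def
  proof (intro conjI allI impI)
    show "xs \<noteq> []" using len lenpos by auto
    fix j assume j: "Suc j < length xs"
    have c: "(f ^^ (q + j)) h0 \<in> P" "(f ^^ (q + j)) h0 \<noteq> p" using fn_P[OF h0P] by auto
    have "xs ! Suc j = f ((f ^^ (q + j)) h0)" using nth[of "Suc j"] j len by simp
    moreover have "xs ! j = (f ^^ (q + j)) h0" using nth[of j] j len by simp
    ultimately show "(xs ! j, xs ! Suc j) \<in> Ap V E p" using f_Ap[OF c] by simp
  qed
  moreover have "hd xs = (f ^^ q) h0"
  proof -
    have "xs \<noteq> []" using len lenpos by auto
    then show ?thesis using nth[of 0] lenpos by (simp add: hd_conv_nth)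
  qed
  moreover have "\<forall>j. 0 < j \<and> j < length xs \<longrightarrow> xs ! j \<in> P - Vsucc V E p s"
  proof (intro allI impI)
    fix j assume j: "0 < j \<and> j < length xs"
    have c: "(f ^^ (q + j)) h0 \<in> P" using fn_P[OF h0P] by auto
    have "(f ^^ (q + j)) h0 \<notin> Vsucc V E p s"
    proof (cases "q + j \<le> n")
      case True
      then show ?thesis using qmax[of "q + j"] j by auto
    next
      case False
      moreover have "q + j < m'" using j len by linarith
      ultimately show ?thesis using m'min[of "q + j"] by auto
    qed
    then show "xs ! j \<in> P - Vsucc V E p s" using c nth[of j] j len by simp
  qed
  moreover have lastx: "last xs = (f ^^ (m' - 1)) h0"
  proof -
    have xne: "xs \<noteq> []" using len lenpos by auto
    have "m' - q - 1 < m' - q" using lenpos by linarith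
    then have "xs ! (m' - q - 1) = (f ^^ (q + (m' - q - 1))) h0" using nth by blast
    moreover have "q + (m' - q - 1) = m' - 1" using q(1) m'(1) by linarith
    ultimately show ?thesis using xne len by (simp add: last_conv_nth)
  qed
  moreover have "succs (Ap V E p) (last xs) = {(f ^^ m') h0}"
  proof -
    have c: "(f ^^ (m' - 1)) h0 \<in> P" "(f ^^ (m' - 1)) h0 \<noteq> p" using fn_P[OF h0P] by auto
    have "f ((f ^^ (m' - 1)) h0) = (f ^^ m') h0" using m'(1)
      by (metis Suc_diff_1 funpow.simps(2) o_apply gr_zeroI less_zeroE)
    then show ?thesis using succs_Ap[OF c] lastx by simp
  qed
  ultimately have "strip V E p s xs" unfolding strip_def using q(2) m'(2) by auto
  moreover have "k0 < n - q" "n - q < length xs" using k0n q(1) m'(1) len by auto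
  moreover have "xs ! k0 = a" using nth[of k0] k0n m'(1) k0a by simp
  moreover have "xs ! (n - q) = b" using nth[of "n - q"] q(1) m'(1) n by simp
  ultimately show ?thesis by blast
qed

end

theorem lemma4p12:
  fixes V :: "'v set" and E :: "('v \<times> 'v) set" and p :: 'v
    and s :: "nat \<Rightarrow> 'v" and i :: nat and a b :: 'v
  assumes "cfg V E"
    and "p \<in> V"
    and "s 1 \<noteq> s 2"
    and "succs E p = {s 1, s 2}"
    and "card (succs (Ap V E p) p) \<ge> 2"
    and "i \<in> {1, 2}"
    and "a \<in> Vp V E p - {p}" and "b \<in> Vp V E p - {p}" and "a \<noteq> b"
  shows "all_before E (s i) a b \<longleftrightarrow>
         (\<exists>xs j k. strip V E p (s i) xs \<and> j < k \<and> k < length xs \<and> xs ! j = a \<and> xs ! k = b)"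
proof -
  obtain u v where uv: "u \<in> succs (Ap V E p) p" "v \<in> succs (Ap V E p) p" "u \<noteq> v"
    using card2[OF assms(5)] by blast
  interpret cfgp V E p u v
    using assms(1) uv unfolding cfg_def succs_def by unfold_locales auto
  have ps: "(p, s i) \<in> E" using assms(4,6) unfolding succs_def by auto
  have a: "a \<in> Vp V E p" "a \<noteq> p" and b: "b \<in> Vp V E p" "b \<noteq> p" using assms(7,8) by auto
  have "all_before E (s i) a b \<longleftrightarrow> \<not> avoidpath E (s i) a b"
    using all_before_iff[OF s_notesc[OF ps a] assms(9)] .
  also have "\<dots> \<longleftrightarrow> (\<exists>xs j k. strip V E p (s i) xs \<and> j < k \<and> k < length xs \<and> xs ! j = a \<and> xs ! k = b)"
    using core1[OF ps _ _ _ _ _ b(1)] core2[OF ps a b assms(9)] by blast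
  finally show ?thesis .
qed

end
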